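(* Let $\lambda=(\lambda_1>\lambda_2>\dots>\lambda_r>0)$ be a strict partition and let $q_\lambda$ be the rational function in $q$ obtained from the Schur $Q$-function $Q_\lambda$, written as a polynomial in $Q_{(1)},Q_{(2)},\dots$, by substituting $Q_{(m)}\mapsto a_m$ for every $m\ge1$, where $$a_m=\prod_{j=1}^m \mathbf{i}\,\frac{q^{j-1}+q^{1-j}}{q^j-q^{-j}}.$$ Then $$q_\lambda=\prod_{j=1}^r a_{\lambda_j}\prod_{1\le i<j\le r}\frac{[\lambda_i-\lambda_j]}{[\lambda_i+\lambda_j]}.$$
   Context: $\mathbf{i}=\sqrt{-1}$ and $[k]=(q^k-q^{-k})/(q-q^{-1})$ is the quantum integer, $q$ a formal variable. Schur $Q$-functions as polynomials in $Q_{(1)},Q_{(2)},\dots$: set $Q_{(0)}=1$; for integers $r>s\ge0$ set $Q_{(r,s)}=Q_{(r)}Q_{(s)}+2\sum_{i=1}^{s}(-1)^iQ_{(r+i)}Q_{(s-i)}$ (so $Q_{(r,0)}=Q_{(r)}$); for a strict partition $\lambda$ with $r$ parts, append a part $\lambda_{r+1}=0$ if $r$ is odd, and define $Q_\lambda$ as the Pfaffian of the antisymmetric matrix with $(i,j)$ entry $Q_{(\lambda_i,\lambda_j)}$ for $i<j$. This expresses $Q_\lambda$ as a universal polynomial in the $Q_{(m)}$ (these are the Hall–Littlewood polynomials at $t=-1$, i.e. characters of Sergeev's polynomial representations of $\mathfrak q(N)$ up to powers of $2$). *)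

theory Defs
  imports Complex_Main "HOL-Computational_Algebra.Polynomial" "HOL-Computational_Algebra.Fraction_Field"
begin

text \<open>Instead of multivariate polynomials we work with an arbitrary assignment
  Qv :: nat => 'a of values to the generators Q_(m) (m >= 1) in a commutative ring;
  the value of the universal polynomial Q_lambda under this substitution is schurQ Qv lambda.
  Since substitution is a ring homomorphism, this is exactly the substituted polynomial.\<close>

definition Qone :: "(nat \<Rightarrow> 'a::comm_ring_1) \<Rightarrow> nat \<Rightarrow> 'a" where
  "Qone Qv m = (if m = 0 then 1 else Qv m)"

text \<open>Q_(r,s) for r > s >= 0.\<close>
definition Qpair :: "(nat \<Rightarrow> 'a::comm_ring_1) \<Rightarrow> nat \<Rightarrow> nat \<Rightarrow> 'a" where
  "Qpair Qv r s = Qone Qv r * Qone Qv s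
     + 2 * (\<Sum>i=1..s. (-1)^i * Qone Qv (r + i) * Qone Qv (s - i))"

text \<open>Pfaffian of the antisymmetric matrix whose entries above the diagonal are
  M x y, indexed by the (ordered) list of indices xs, via expansion along the first row:
  Pf = sum over j of (-1)^j a_{1j} Pf(minor).\<close>
function pf :: "('b \<Rightarrow> 'b \<Rightarrow> 'a::comm_ring_1) \<Rightarrow> 'b list \<Rightarrow> 'a" where
  "pf M [] = 1"
| "pf M (x # xs) =
     (\<Sum>k<length xs. (-1)^k * M x (xs ! k) * pf M (take k xs @ drop (Suc k) xs))"
  by pat_completeness auto
termination
  by (relation "measure (\<lambda>(M, xs). length xs)") auto

definition pad_even :: "nat list \<Rightarrow> nat list" where
  "pad_even lam = (if odd (length lam) then lam @ [0] else lam)"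

definition schurQ :: "(nat \<Rightarrow> 'a::comm_ring_1) \<Rightarrow> nat list \<Rightarrow> 'a" where
  "schurQ Qv lam =
     (let mu = pad_even lam in
      pf (\<lambda>i j. Qpair Qv (mu ! i) (mu ! j)) [0..<length mu])"

definition strict_partition :: "nat list \<Rightarrow> bool" where
  "strict_partition lam \<longleftrightarrow> sorted_wrt (>) lam \<and> (\<forall>x\<in>set lam. x > 0)"

type_synonym ratfun = "complex poly fract"

definition cst :: "complex \<Rightarrow> ratfun" where
  "cst c = Fract [:c:] 1"

definition qv :: ratfun where
  "qv = Fract [:0, 1:] 1"

definition qint :: "int \<Rightarrow> ratfun" where
  "qint k = (qv powi k - qv powi (-k)) / (qv - inverse qv)"

definition aq :: "nat \<Rightarrow> ratfun" where
  "aq m = (\<Prod>j=1..m. cst \<i> *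
      ((qv powi (int j - 1) + qv powi (1 - int j)) / (qv powi (int j) - qv powi (- int j))))"

end

theory Submission
  imports Defs
begin

definition ff :: "'a::field \<Rightarrow> 'a \<Rightarrow> 'a" where "ff a b = (a - b) / (a + b)"
definition gg :: "'a::field \<Rightarrow> 'a \<Rightarrow> 'a" where "gg a b = (a + b) / (a - b)"

lemma key3:
  fixes x a z :: "'a::field"
  assumes "x + a \<noteq> 0" "a \<noteq> z" "x + z \<noteq> 0"
  shows "ff x a * gg a z = -1 + ff x z * gg a z + ff x z * ff x a"
proof -
  have h: "a - z \<noteq> 0" "a + x \<noteq> 0" "z + x \<noteq> 0" using assms by (auto simp: add.commute)
  have e1: "ff x z * gg a z = ((x-z)*(a+z))/((x+z)*(a-z))" by (simp add: ff_def gg_def)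
  have e2: "ff x z * ff x a = ((x-z)*(x-a))/((x+z)*(x+a))" by (simp add: ff_def gg_def)
  have "ff x a * gg a z = ((x-a)*(a+z))/((x+a)*(a-z))" by (simp add: ff_def gg_def)
  also have "\<dots> = (- ((x+a)*(a-z)*(x+z)) + (x-z)*(a+z)*(x+a) + (x-z)*(x-a)*(a-z)) / ((x+a)*(a-z)*(x+z))"
    using assms h by (simp add: frac_eq_eq) algebra
  also have "\<dots> = -1 + ((x-z)*(a+z))/((x+z)*(a-z)) + ((x-z)*(x-a))/((x+z)*(x+a))"
    using assms h by (simp add: divide_simps) algebra
  finally show ?thesis unfolding e1 e2 .
qed

lemma gg_neg: "gg a z = - ff (-z) (a::'a::field)"
proof -
  have h: "-z - a = - (a + z)" "-z + a = a - z" by simp_all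
  show ?thesis unfolding ff_def gg_def h minus_divide_left[symmetric] minus_minus ..
qed
lemma ff_neg: "ff (-z) b = gg z (b::'a::field)"
proof -
  have h: "-z - b = - (z + b)" "-z + b = - (z - b)" by simp_all
  show ?thesis unfolding ff_def gg_def h minus_divide_divide ..
qed

lemma schur_sum:
  fixes y :: "'b \<Rightarrow> 'a::field"
  assumes "finite C" "\<forall>c\<in>C. \<forall>b\<in>C. c \<noteq> b \<longrightarrow> y c \<noteq> y b \<and> y c + y b \<noteq> 0"
  shows "(\<forall>x. (\<forall>c\<in>C. x + y c \<noteq> 0) \<longrightarrow>
      (\<Sum>c\<in>C. ff x (y c) * (\<Prod>b\<in>C-{c}. gg (y c) (y b))) = (\<Prod>c\<in>C. ff x (y c)) - (if even (card C) then 1 else 0))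
    \<and> (\<Sum>c\<in>C. \<Prod>b\<in>C-{c}. gg (y c) (y b)) = (if even (card C) then 0 else 1)"
  using assms
proof (induction C rule: finite_induct)
  case empty
  then show ?case by simp
next
  case (insert z F)
  define P where "P c = (\<Prod>b\<in>F-{c}. gg (y c) (y b))" for c
  define e where "e = (if even (card F) then (1::'a) else 0)"
  have cond: "\<forall>c\<in>F. \<forall>b\<in>F. c \<noteq> b \<longrightarrow> y c \<noteq> y b \<and> y c + y b \<noteq> 0" using insert.prems by blast
  have IH1: "\<And>x. (\<forall>c\<in>F. x + y c \<noteq> 0) \<Longrightarrow> (\<Sum>c\<in>F. ff x (y c) * P c) = (\<Prod>c\<in>F. ff x (y c)) - e"
    using insert.IH cond unfolding P_def e_def by blast
  have IH2: "(\<Sum>c\<in>F. P c) = 1 - e"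
    using insert.IH cond unfolding P_def e_def by auto
  have zc: "\<forall>c\<in>F. y z \<noteq> y c \<and> y z + y c \<noteq> 0" using insert.prems insert.hyps by fastforce
  have negz: "\<forall>c\<in>F. - y z + y c \<noteq> 0" using zc by (metis add.commute eq_neg_iff_add_eq_0 neg_equal_iff_equal)
  have Pins: "\<And>c. c \<in> F \<Longrightarrow> (\<Prod>b\<in>insert z F-{c}. gg (y c) (y b)) = gg (y c) (y z) * P c"
  proof -
    fix c assume "c \<in> F"
    then have "insert z F - {c} = insert z (F - {c})" using insert.hyps by auto
    then show "(\<Prod>b\<in>insert z F-{c}. gg (y c) (y b)) = gg (y c) (y z) * P c"
      unfolding P_def using insert.hyps by simp
  qed
  have Pz: "(\<Prod>b\<in>insert z F-{z}. gg (y z) (y b)) = (\<Prod>b\<in>F. gg (y z) (y b))"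
    using insert.hyps by (metis Diff_insert_absorb)
  have A: "(\<Sum>c\<in>F. gg (y c) (y z) * P c) = e - (\<Prod>b\<in>F. gg (y z) (y b))"
  proof -
    have "(\<Sum>c\<in>F. gg (y c) (y z) * P c) = - (\<Sum>c\<in>F. ff (- y z) (y c) * P c)"
      by (auto simp: gg_neg sum_negf[symmetric] intro!: sum.cong)
    also have "\<dots> = - ((\<Prod>c\<in>F. ff (- y z) (y c)) - e)" using IH1[OF negz] by simp
    finally show ?thesis by (simp add: ff_neg)
  qed
  have card: "card (insert z F) = Suc (card F)" using insert.hyps by simp
  have S0: "(\<Sum>c\<in>insert z F. \<Prod>b\<in>insert z F-{c}. gg (y c) (y b)) = (if even (card (insert z F)) then 0 else 1)"
  proof -
    have "(\<Sum>c\<in>insert z F. \<Prod>b\<in>insert z F-{c}. gg (y c) (y b))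
        = (\<Prod>b\<in>F. gg (y z) (y b)) + (\<Sum>c\<in>F. gg (y c) (y z) * P c)"
      using insert.hyps Pins Pz by simp
    also have "\<dots> = e" using A by simp
    finally show ?thesis using card e_def by simp
  qed
  have Phi: "(\<Sum>c\<in>insert z F. ff x (y c) * (\<Prod>b\<in>insert z F-{c}. gg (y c) (y b)))
     = (\<Prod>c\<in>insert z F. ff x (y c)) - (if even (card (insert z F)) then 1 else 0)"
    if xv: "\<forall>c\<in>insert z F. x + y c \<noteq> 0" for x
  proof -
    have xF: "\<forall>c\<in>F. x + y c \<noteq> 0" using xv by auto
    have xz: "x + y z \<noteq> 0" using xv by auto
    have "(\<Sum>c\<in>insert z F. ff x (y c) * (\<Prod>b\<in>insert z F-{c}. gg (y c) (y b)))
      = ff x (y z) * (\<Prod>b\<in>F. gg (y z) (y b)) + (\<Sum>c\<in>F. (ff x (y c) * gg (y c) (y z)) * P c)"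
      using insert.hyps Pins Pz by (simp add: mult.assoc)
    also have "(\<Sum>c\<in>F. (ff x (y c) * gg (y c) (y z)) * P c)
       = (\<Sum>c\<in>F. (-1 + ff x (y z) * gg (y c) (y z) + ff x (y z) * ff x (y c)) * P c)"
    proof (rule sum.cong[OF refl])
      fix c assume c: "c \<in> F"
      then have "y c \<noteq> y z" "x + y c \<noteq> 0" using zc xF by auto
      then show "(ff x (y c) * gg (y c) (y z)) * P c = (-1 + ff x (y z) * gg (y c) (y z) + ff x (y z) * ff x (y c)) * P c"
        using key3[of x "y c" "y z"] xz by simp
    qed
    also have "\<dots> = (\<Sum>c\<in>F. - P c + ff x (y z) * (gg (y c) (y z) * P c) + ff x (y z) * (ff x (y c) * P c))"
      by (intro sum.cong) (simp_all add: algebra_simps)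
    also have "\<dots> = - (\<Sum>c\<in>F. P c) + ff x (y z) * (\<Sum>c\<in>F. gg (y c) (y z) * P c)
        + ff x (y z) * (\<Sum>c\<in>F. ff x (y c) * P c)"
      by (simp add: sum.distrib sum_distrib_left sum_negf sum_subtractf)
    also have "\<dots> = - (1 - e) + ff x (y z) * (e - (\<Prod>b\<in>F. gg (y z) (y b)))
        + ff x (y z) * ((\<Prod>c\<in>F. ff x (y c)) - e)"
      using IH2 A IH1[OF xF] by simp
    also have "\<dots> = ff x (y z) * (\<Prod>c\<in>F. ff x (y c)) - (1 - e) - ff x (y z) * (\<Prod>b\<in>F. gg (y z) (y b))"
      by (simp add: algebra_simps)
    finally show ?thesis using card insert.hyps by (simp add: e_def)
  qed
  show ?case using S0 Phi by blast
qed

lemma frac_helper: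
  fixes x y u v D1 D2 D3 :: "'a::field"
  assumes "D1 \<noteq> 0" "D2 \<noteq> 0" "D3 \<noteq> 0" "x*y*D2 + u*v*D1 = (x*D2 - u*D1)*D3"
  shows "x/D1 * (y/D3) + u/D2*(v/D3) = x/D1 - u/D2"
proof -
  have "x/D1 * (y/D3) + u/D2*(v/D3) = (x*y*D2 + u*v*D1)/(D1*D2*D3)" using assms by (simp add: field_simps)
  also have "\<dots> = (x*D2 - u*D1)/(D1*D2)" using assms(1-3) unfolding assms(4) by (simp add: field_simps)
  also have "\<dots> = x/D1 - u/D2" using assms by (simp add: field_simps)
  finally show ?thesis .
qed

lemma KI2:
  fixes q p A B :: "'a::field"
  assumes "p*B - 1 \<noteq> 0" "p*A - 1 \<noteq> 0" "1 - p*A*B \<noteq> 0"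
  shows "q*(B+1)/(p*B-1) * ((p*B-A)/(1-p*A*B)) + q*(A+1)/(p*A-1)*((B-p*A)/(1-p*A*B))
     = q*(B+1)/(p*B-1) - q*(A+1)/(p*A-1)"
  by (rule frac_helper[OF assms]) (simp add: algebra_simps)

lemma KI:
  fixes q X Z :: "'a::field"
  assumes "q \<noteq> 0" "X \<noteq> 0" "Z \<noteq> 0" "1 - X^2*(q*Z)^2 \<noteq> 0" 
    "(q*Z)^2 \<noteq> 1" "(q*X)^2 \<noteq> 1"
  shows "(Z + inverse Z)/(q*Z - inverse(q*Z)) * (((q*Z)^2 - X^2)/(1 - X^2*(q*Z)^2))
    + (X + inverse X)/(q*X - inverse (q*X)) * ((Z^2 - (q*X)^2)/(1 - (q*X)^2*Z^2))
    = (Z + inverse Z)/(q*Z - inverse(q*Z)) - (X + inverse X)/(q*X - inverse (q*X))"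
proof -
  have h: "(Y + inverse Y)/(q*Y - inverse(q*Y)) = q*(Y^2+1)/(q^2*Y^2-1)" if "Y \<noteq> 0" "(q*Y)^2 \<noteq> 1" for Y
  proof -
    have "q^2*Y^2-1 \<noteq> 0" using that by (simp add: power_mult_distrib)
    then show ?thesis using that assms(1) by (simp add: field_simps power2_eq_square)
  qed
  have e: "(q*Z)^2 = q^2*Z^2" "(q*X)^2 = q^2*X^2" "X^2*(q^2*Z^2) = q^2*X^2*Z^2" by (simp_all add: power_mult_distrib)
  have n: "q^2*Z^2 - 1 \<noteq> 0" "q^2*X^2 - 1 \<noteq> 0" "1 - q^2*X^2*Z^2 \<noteq> 0" using assms e by auto
  show ?thesis unfolding h[OF assms(3,5)] h[OF assms(2,6)] unfolding e
    by (rule KI2[OF n])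
qed

lemma qv_pow: "qv ^ n = Fract (monom 1 n) 1"
proof (induction n)
  case 0
  then show ?case by (simp add: One_fract_def)
next
  case (Suc n)
  have "[:0, 1:] * monom (1::complex) n = monom 1 (Suc n)" by (simp add: monom_Suc)
  then show ?case using Suc by (simp add: qv_def)
qed

lemma qv_ne0: "qv \<noteq> 0"
  by (simp add: qv_def Zero_fract_def eq_fract)

lemma qv_pow_ne1: "n \<noteq> 0 \<Longrightarrow> qv ^ n \<noteq> 1"
  by (simp add: qv_pow One_fract_def eq_fract monom_eq_1_iff)

lemma qv_pow_nem1: "qv ^ n \<noteq> -1"
proof
  assume "qv ^ n = -1"
  then have "Fract (monom 1 n) 1 = Fract (-1) (1::complex poly)" by (simp add: qv_pow One_fract_def)
  then have "monom (1::complex) n = -1" by (simp add: eq_fract)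
  then have "coeff (monom (1::complex) n) n = coeff (-1) n" by simp
  then show False by (cases "n = 0") (simp_all add: coeff_1)
qed

lemma two_ne0: "(2::ratfun) \<noteq> 0"
proof
  assume "(2::ratfun) = 0"
  then have "(1::ratfun) + 1 = 0" by (simp only: one_add_one)
  then have "(1::ratfun) = -1" by (simp only: eq_neg_iff_add_eq_0)
  then show False using qv_pow_nem1[of 0] by simp
qed

lemma qsq: "(qv ^ m)^2 = qv ^ (2*m)" by (simp add: power_mult[symmetric] mult.commute)

lemma P1: "1 + (qv^m)^2 \<noteq> 0"
  using qv_pow_nem1[of "2*m"] by (simp add: qsq eq_neg_iff_add_eq_0 add.commute)

lemma P2: "m \<noteq> 0 \<Longrightarrow> (qv^m)^2 \<noteq> 1"
  using qv_pow_ne1[of "2*m"] by (simp add: qsq)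

lemma P3: "a + b \<noteq> 0 \<Longrightarrow> (qv^a)^2 * (qv^b)^2 \<noteq> 1"
  using qv_pow_ne1[of "2*(a+b)"] by (simp add: qsq power_add[symmetric] algebra_simps)

lemma qpow_inj: "(qv^a)^2 = (qv^b)^2 \<Longrightarrow> a = b"
proof (rule ccontr)
  assume e: "(qv^a)^2 = (qv^b)^2" and ne: "a \<noteq> b"
  have nz: "qv ^ n \<noteq> 0" for n using qv_ne0 by simp
  { fix a b :: nat assume e: "qv^(2*a) = qv^(2*b)" and lt: "a < b"
    have "2*b = 2*a + 2*(b-a)" using lt by simp
    then have "qv^(2*a) * 1 = qv^(2*a) * qv^(2*(b-a))" using e by (metis power_add mult_1_right)
    then have "qv^(2*(b-a)) = 1" using nz[of "2*a"] by (metis mult_left_cancel)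
    then have False using qv_pow_ne1[of "2*(b-a)"] lt by simp }
  then show False using e ne by (metis qsq linorder_neqE_nat)
qed

definition Yv :: "nat \<Rightarrow> ratfun" where "Yv m = (1 - (qv^m)^2) / (1 + (qv^m)^2)"

lemma ff_Y_generic:
  fixes A B :: "'a::field"
  assumes "1 + A \<noteq> 0" "1 + B \<noteq> 0" "1 - A*B \<noteq> 0" "(2::'a) \<noteq> 0"
  shows "ff ((1-A)/(1+A)) ((1-B)/(1+B)) = (B - A)/(1 - A*B)"
proof -
  have n: "(1-A)/(1+A) - (1-B)/(1+B) = 2*(B-A)/((1+A)*(1+B))" using assms
    apply (simp add: field_simps) apply (simp add: algebra_simps)? done
  have d: "(1-A)/(1+A) + (1-B)/(1+B) = 2*(1-A*B)/((1+A)*(1+B))" using assms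
    apply (simp add: field_simps) apply (simp add: algebra_simps)? done
  have "(1+A)*(1+B) \<noteq> 0" using assms by simp
  moreover have "2*(B-A)/((1+A)*(1+B)) / (2*(1-A*B)/((1+A)*(1+B))) = (B - A)/(1 - A*B)"
    using assms calculation apply (simp add: divide_simps) apply (simp add: algebra_simps)? done
  ultimately show ?thesis unfolding ff_def n d by simp
qed

lemma ffY: "a + b \<noteq> 0 \<Longrightarrow> ff (Yv a) (Yv b) = ((qv^b)^2 - (qv^a)^2) / (1 - (qv^a)^2 * (qv^b)^2)"
  unfolding Yv_def using P1 P3 two_ne0 by (intro ff_Y_generic) auto

lemma Yv0: "Yv 0 = 0" by (simp add: Yv_def)

lemma Yv_ne0: "a \<noteq> 0 \<Longrightarrow> Yv a \<noteq> 0"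
  unfolding Yv_def using P1[of a] P2[of a] by simp

lemma Yv_inj: "Yv a = Yv b \<Longrightarrow> a = b"
proof -
  assume e: "Yv a = Yv b"
  define A where "A = (qv^a)^2"
  define B where "B = (qv^b)^2"
  have nz: "1 + A \<noteq> 0" "1 + B \<noteq> 0" using P1 A_def B_def by auto
  have "(1-A)/(1+A) = (1-B)/(1+B)" using e unfolding Yv_def A_def B_def .
  then have "(1-A)*(1+B) = (1-B)*(1+A)" using nz by (simp add: frac_eq_eq)
  then have "A = B" using two_ne0 by (auto simp: algebra_simps)
  then show "a = b" using qpow_inj A_def B_def by simp
qed

lemma Yv_sum: "a \<noteq> b \<Longrightarrow> Yv a + Yv b \<noteq> 0"
proof -
  assume ab: "a \<noteq> b"
  define A where "A = (qv^a)^2"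
  define B where "B = (qv^b)^2"
  have nz: "1 + A \<noteq> 0" "1 + B \<noteq> 0" "1 - A*B \<noteq> 0" using P1 P3[of a b] ab A_def B_def by auto
  have "(1-A)/(1+A) + (1-B)/(1+B) = 2*(1-A*B)/((1+A)*(1+B))" using nz
    apply (simp add: field_simps) apply (simp add: algebra_simps)? done
  moreover have "2*(1-A*B)/((1+A)*(1+B)) \<noteq> 0" using nz two_ne0 by simp
  ultimately show ?thesis unfolding Yv_def A_def B_def by simp
qed

lemma aq0: "aq 0 = 1" by (simp add: aq_def)

lemma aq_Suc: "aq (Suc m) = aq m * (cst \<i> * ((qv^m + inverse (qv^m)) / (qv*qv^m - inverse (qv*qv^m))))"
proof -
  define T where "T j = cst \<i> * ((qv powi (int j - 1) + qv powi (1 - int j)) / (qv powi (int j) - qv powi (- int j)))" for j :: nat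
  have a: "aq n = (\<Prod>j=1..n. T j)" for n unfolding aq_def T_def by simp
  have "aq (Suc m) = T (Suc m) * aq m" unfolding a by (subst prod.nat_ivl_Suc') simp_all
  moreover have "int (Suc m) - 1 = int m" "1 - int (Suc m) = - int m" by simp_all
  moreover have "qv powi (int (Suc m)) = qv * qv^m" "qv powi (- int (Suc m)) = inverse (qv * qv^m)"
    by (simp_all only: power_int_of_nat power_int_minus power_Suc)
  ultimately show ?thesis unfolding T_def by (simp only: power_int_of_nat power_int_minus mult.commute)
qed

lemma Qone_aq: "Qone aq = aq"
  by (rule ext) (simp add: Qone_def aq0)

lemma Qpair_rec: "Qpair Qv r (Suc s) + Qpair Qv (Suc r) s = Qone Qv r * Qone Qv (Suc s) - Qone Qv (Suc r) * Qone Qv s"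
proof -
  let ?a = "Qone Qv"
  have "(\<Sum>i=1..Suc s. (-1)^i * ?a (r + i) * ?a (Suc s - i))
      = - (?a (Suc r) * ?a s) + (\<Sum>i=Suc 1..Suc s. (-1)^i * ?a (r + i) * ?a (Suc s - i))"
    by (subst sum.atLeast_Suc_atMost) simp_all
  also have "(\<Sum>i=Suc 1..Suc s. (-1)^i * ?a (r + i) * ?a (Suc s - i)) = (\<Sum>i=1..s. (-1)^(Suc i) * ?a (r + Suc i) * ?a (Suc s - Suc i))"
    by (rule sum.shift_bounds_cl_Suc_ivl)
  also have "\<dots> = - (\<Sum>i=1..s. (-1)^i * ?a (Suc r + i) * ?a (s - i))"
    by (simp add: sum_negf[symmetric])
  finally have "(\<Sum>i=1..Suc s. (-1)^i * ?a (r + i) * ?a (Suc s - i)) + (\<Sum>i=1..s. (-1)^i * ?a (Suc r + i) * ?a (s - i)) = - (?a (Suc r) * ?a s)"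
    by simp
  then have h: "(\<Sum>i=1..Suc s. (-1)^i * ?a (r + i) * ?a (Suc s - i)) + (\<Sum>i=1..s. (-1)^i * ?a (Suc r + i) * ?a (s - i)) = - (?a (Suc r) * ?a s)" .
  have "Qpair Qv r (Suc s) + Qpair Qv (Suc r) s = ?a r * ?a (Suc s) + ?a (Suc r) * ?a s
     + 2 * ((\<Sum>i=1..Suc s. (-1)^i * ?a (r + i) * ?a (Suc s - i)) + (\<Sum>i=1..s. (-1)^i * ?a (Suc r + i) * ?a (s - i)))"
    unfolding Qpair_def by (simp add: distrib_left)
  also have "\<dots> = ?a r * ?a (Suc s) - ?a (Suc r) * ?a s" unfolding h by simp
  finally show ?thesis .
qed

lemma rem_facts:
  assumes "distinct xs" "k < length xs"
  shows "set xs = insert (xs!k) (set (take k xs @ drop (Suc k) xs))"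
    "xs!k \<notin> set (take k xs @ drop (Suc k) xs)"
    "distinct (take k xs @ drop (Suc k) xs)"
    "length (take k xs @ drop (Suc k) xs) = length xs - 1"
proof -
  have e: "xs = take k xs @ xs!k # drop (Suc k) xs" using assms(2) by (simp add: id_take_nth_drop)
  have d: "distinct (take k xs @ xs!k # drop (Suc k) xs)" using assms(1) e by metis
  show "set xs = insert (xs!k) (set (take k xs @ drop (Suc k) xs))" by (subst e) auto
  show "xs!k \<notin> set (take k xs @ drop (Suc k) xs)" using d by auto
  show "distinct (take k xs @ drop (Suc k) xs)" using d by auto
  show "length (take k xs @ drop (Suc k) xs) = length xs - 1" using assms(2) by simp
qed

lemma pf_odd: "odd (length xs) \<Longrightarrow> pf M xs = 0"
proof (induction M xs rule: pf.induct)
  case (1 M)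
  then show ?case by simp
next
  case (2 M x xs)
  have "pf M (take k xs @ drop (Suc k) xs) = 0" if "k < length xs" for k
  proof -
    have "xs \<noteq> []" using that by auto
    then show ?thesis using 2 that by simp
  qed
  then show ?case by simp
qed

lemma sorted_rem: "sorted_wrt (<) (xs::'b::linorder list) \<Longrightarrow> sorted_wrt (<) (take k xs @ drop (Suc k) xs)"
proof -
  assume s: "sorted_wrt (<) xs"
  have "sorted_wrt (<) (take k xs @ drop k xs)" using s by simp
  then have "\<forall>a\<in>set (take k xs). \<forall>b\<in>set (drop k xs). a < b" by (auto simp only: sorted_wrt_append)
  moreover have "set (drop (Suc k) xs) \<subseteq> set (drop k xs)" by (rule set_drop_subset_set_drop) simp
  ultimately show ?thesis using s by (auto simp only: sorted_wrt_append sorted_wrt_take sorted_wrt_drop)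
qed

lemma pf_cong: "sorted_wrt (<) (xs::'b::linorder list) \<Longrightarrow> (\<forall>i\<in>set xs. \<forall>j\<in>set xs. i < j \<longrightarrow> M i j = N i j) \<Longrightarrow> pf M xs = pf N xs"
proof (induction M xs rule: pf.induct)
  case (1 M)
  then show ?case by simp
next
  case (2 M x xs)
  show ?case
  proof (simp only: pf.simps, rule sum.cong[OF refl])
    fix k assume k: "k \<in> {..<length xs}"
    have "sorted_wrt (<) xs" using 2(2) by simp
    then have s: "sorted_wrt (<) (take k xs @ drop (Suc k) xs)" by (rule sorted_rem)
    have sub: "set (take k xs @ drop (Suc k) xs) \<subseteq> set xs"
      using set_take_subset set_drop_subset by fastforce
    have "pf M (take k xs @ drop (Suc k) xs) = pf N (take k xs @ drop (Suc k) xs)"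
    proof -
      have "\<forall>i\<in>set (take k xs @ drop (Suc k) xs). \<forall>j\<in>set (take k xs @ drop (Suc k) xs). i < j \<longrightarrow> M i j = N i j"
        using 2(3) sub by (meson list.set_intros(2) subsetD)
      then show ?thesis by (rule 2(1)[OF k s])
    qed
    moreover have "M x (xs!k) = N x (xs!k)" using 2(2,3) k by auto
    ultimately show "(-1)^k * M x (xs!k) * pf M (take k xs @ drop (Suc k) xs) = (-1)^k * N x (xs!k) * pf N (take k xs @ drop (Suc k) xs)"
      by simp
  qed
qed

lemma pf_scale: "distinct xs \<Longrightarrow> pf (\<lambda>i j. c i * c j * N i j) xs = (\<Prod>i\<in>set xs. c i) * pf N xs"
proof (induction N xs rule: pf.induct)
  case (1 N)
  then show ?case by simp
next
  case (2 N x xs)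
  have "(-1)^k * (c x * c (xs!k) * N x (xs!k)) * pf (\<lambda>i j. c i * c j * N i j) (take k xs @ drop (Suc k) xs)
     = (\<Prod>i\<in>set (x#xs). c i) * ((-1)^k * N x (xs!k) * pf N (take k xs @ drop (Suc k) xs))"
    if k: "k \<in> {..<length xs}" for k
  proof -
    have dx: "distinct xs" "x \<notin> set xs" using 2(2) by auto
    note rf = rem_facts[OF dx(1), of k]
    have IH: "pf (\<lambda>i j. c i * c j * N i j) (take k xs @ drop (Suc k) xs) = (\<Prod>i\<in>set (take k xs @ drop (Suc k) xs). c i) * pf N (take k xs @ drop (Suc k) xs)"
      using 2(1)[OF k] rf k by simp
    have P: "(\<Prod>i\<in>set (x#xs). c i) = c x * (c (xs!k) * (\<Prod>i\<in>set (take k xs @ drop (Suc k) xs). c i))"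
      using rf k dx by (simp add: prod.insert_remove)
    show ?thesis unfolding IH P by (simp only: mult_ac)
  qed
  then show ?case by (simp add: sum_distrib_left)
qed

fun PP :: "('b \<Rightarrow> 'b \<Rightarrow> 'a::comm_ring_1) \<Rightarrow> 'b list \<Rightarrow> 'a" where
  "PP F [] = 1"
| "PP F (x # xs) = (\<Prod>b\<in>set xs. F x b) * PP F xs"

lemma PP_rem:
  "distinct xs \<Longrightarrow> k < length xs \<Longrightarrow> (\<forall>a\<in>set xs. \<forall>b\<in>set xs. F a b = - F b a) \<Longrightarrow>
   PP F xs = (-1)^k * (\<Prod>b\<in>set xs - {xs!k}. F (xs!k) b) * PP F (take k xs @ drop (Suc k) xs)"
proof (induction xs arbitrary: k)
  case Nil
  then show ?case by simp
next
  case (Cons x xs)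
  show ?case
  proof (cases k)
    case 0
    have "set (x#xs) - {x} = set xs" using Cons.prems(1) by auto
    then show ?thesis using 0 by simp
  next
    case (Suc k')
    have k': "k' < length xs" using Cons.prems(2) Suc by simp
    have dx: "distinct xs" "x \<notin> set xs" using Cons.prems(1) by auto
    define c where "c = xs!k'"
    define R where "R = take k' xs @ drop (Suc k') xs"
    note rf = rem_facts[OF dx(1) k', folded c_def R_def]
    have cin: "c \<in> set xs" using k' c_def by simp
    have asy: "\<forall>a\<in>set xs. \<forall>b\<in>set xs. F a b = - F b a" using Cons.prems(3) by (meson list.set_intros(2))
    have IH: "PP F xs = (-1)^k' * (\<Prod>b\<in>set xs - {c}. F c b) * PP F R"
      using Cons.IH[OF dx(1) k' asy] unfolding c_def R_def .
    have e1: "take k (x#xs) @ drop (Suc k) (x#xs) = x # R" using Suc R_def by simp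
    have e2: "(x#xs)!k = c" using Suc c_def by simp
    have e3: "set (x#xs) - {c} = insert x (set xs - {c})" using cin dx by auto
    have p1: "(\<Prod>b\<in>set (x#xs) - {c}. F c b) = F c x * (\<Prod>b\<in>set xs - {c}. F c b)"
      unfolding e3 using dx by simp
    have p2: "(\<Prod>b\<in>set xs. F x b) = F x c * (\<Prod>b\<in>set R. F x b)"
      using rf by simp
    have anti: "F x c = - F c x" using Cons.prems(3) cin by (meson list.set_intros(1) list.set_intros(2))
    show ?thesis unfolding e1 e2 p1 using IH p2 anti Suc by (simp add: algebra_simps)
  qed
qed

lemma PP_upt_aux: "PP F [m..<m+d] = (\<Prod>i\<in>{m..<m+d}. \<Prod>j\<in>{i<..<m+d}. F i j)"
proof (induction d arbitrary: m)
  case 0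
  then show ?case by simp
next
  case (Suc d)
  have e: "[m..<m + Suc d] = m # [Suc m..<Suc m + d]" by (simp add: upt_conv_Cons)
  have IH: "PP F [Suc m..<Suc m + d] = (\<Prod>i\<in>{Suc m..<Suc m+d}. \<Prod>j\<in>{i<..<Suc m+d}. F i j)" by (rule Suc.IH)
  have "(\<Prod>i\<in>{m..<m+Suc d}. \<Prod>j\<in>{i<..<m+Suc d}. F i j) = (\<Prod>j\<in>{m<..<m+Suc d}. F m j) * (\<Prod>i\<in>{Suc m..<m+Suc d}. \<Prod>j\<in>{i<..<m+Suc d}. F i j)"
    by (rule prod.atLeast_Suc_lessThan) simp
  moreover have "{m<..<m+Suc d} = set [Suc m..<Suc m + d]" by auto
  ultimately show ?case unfolding e using IH by simp
qed

lemma PP_upt: "PP F [0..<n] = (\<Prod>i<n. \<Prod>j\<in>{i<..<n}. F i j)"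
  using PP_upt_aux[of F 0 n] by (simp add: atLeast0LessThan)

lemma ff_antisym: "ff b a = - ff a (b::'a::field)"
proof -
  have h: "b - a = - (a - b)" "b + a = a + b" by simp_all
  show ?thesis unfolding ff_def h minus_divide_left ..
qed

lemma gg_ff: "(a::'a::field) \<noteq> b \<Longrightarrow> a + b \<noteq> 0 \<Longrightarrow> gg a b * ff a b = 1"
proof -
  assume h: "a \<noteq> b" "a + b \<noteq> 0"
  then have nz: "(a+b)*(a-b) \<noteq> 0" by simp
  have "gg a b * ff a b = ((a+b)*(a-b))/((a-b)*(a+b))" unfolding ff_def gg_def by (rule times_divide_times_eq)
  also have "\<dots> = 1" using nz by (simp add: mult.commute)
  finally show ?thesis .
qed

lemma ff_nz: "(a::'a::field) \<noteq> b \<Longrightarrow> a + b \<noteq> 0 \<Longrightarrow> ff a b \<noteq> 0"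
  unfolding ff_def by simp

lemma m1sq: "(-1::'a::comm_ring_1)^k * (-1)^k = 1"
  by (simp flip: power_mult_distrib)

lemma schur_pf:
  fixes y :: "'b \<Rightarrow> 'a::field"
  shows "M = (\<lambda>i j. ff (y i) (y j)) \<Longrightarrow> distinct xs \<Longrightarrow> even (length xs) \<Longrightarrow>
    (\<forall>i\<in>set xs. \<forall>j\<in>set xs. i \<noteq> j \<longrightarrow> y i \<noteq> y j \<and> y i + y j \<noteq> 0) \<Longrightarrow> pf M xs = PP M xs"
proof (induction M xs rule: pf.induct)
  case (1 M)
  then show ?case by simp
next
  case (2 M x xs)
  have dx: "distinct xs" "x \<notin> set xs" using 2(3) by auto
  have ol: "odd (length xs)" using 2(4) by simp
  have condxs: "\<forall>i\<in>set xs. \<forall>j\<in>set xs. i \<noteq> j \<longrightarrow> y i \<noteq> y j \<and> y i + y j \<noteq> 0"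
    using 2(5) by (meson list.set_intros(2))
  have asy: "\<forall>a\<in>set xs. \<forall>b\<in>set xs. M a b = - M b a" unfolding 2(2) using ff_antisym by blast
  define h where "h c = ff (y x) (y c) * (\<Prod>b\<in>set xs - {c}. gg (y c) (y b))" for c
  have tm: "(-1)^k * M x (xs!k) * pf M (take k xs @ drop (Suc k) xs) = PP M xs * h (xs!k)"
    if k: "k \<in> {..<length xs}" for k
  proof -
    define c where "c = xs!k"
    define R where "R = take k xs @ drop (Suc k) xs"
    have kl: "k < length xs" using k by simp
    note rf = rem_facts[OF dx(1) kl, folded c_def R_def]
    have cin: "c \<in> set xs" using kl c_def by simp
    have subR: "set R \<subseteq> set xs" using rf by auto
    have condR: "\<forall>i\<in>set R. \<forall>j\<in>set R. i \<noteq> j \<longrightarrow> y i \<noteq> y j \<and> y i + y j \<noteq> 0"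
      using condxs subR by blast
    have evR: "even (length R)" using rf(4) ol kl by simp
    have pfR: "pf M R = PP M R" using 2(1)[OF k 2(2)] rf(3) evR condR unfolding R_def by blast
    have PPx: "PP M xs = (-1)^k * (\<Prod>b\<in>set xs - {c}. M c b) * PP M R"
      using PP_rem[OF dx(1) kl asy] unfolding c_def R_def .
    have gf: "(\<Prod>b\<in>set xs - {c}. gg (y c) (y b)) * (\<Prod>b\<in>set xs - {c}. M c b) = 1"
    proof -
      have "(\<Prod>b\<in>set xs - {c}. gg (y c) (y b)) * (\<Prod>b\<in>set xs - {c}. M c b) = (\<Prod>b\<in>set xs - {c}. gg (y c) (y b) * ff (y c) (y b))"
        using 2(2) by (simp add: prod.distrib)
      also have "\<dots> = (\<Prod>b\<in>set xs - {c}. 1)"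
        using condxs cin by (intro prod.cong refl gg_ff) auto
      finally show ?thesis by simp
    qed
    have PPR: "PP M R = (-1)^k * (\<Prod>b\<in>set xs - {c}. gg (y c) (y b)) * PP M xs"
    proof -
      have "(-1)^k * (\<Prod>b\<in>set xs - {c}. gg (y c) (y b)) * PP M xs
          = ((-1)^k * (-1)^k) * ((\<Prod>b\<in>set xs - {c}. gg (y c) (y b)) * (\<Prod>b\<in>set xs - {c}. M c b)) * PP M R"
        unfolding PPx by (simp only: mult_ac)
      then show ?thesis unfolding gf m1sq by simp
    qed
    have "(-1)^k * M x c * pf M R = ((-1)^k * (-1)^k) * PP M xs * (M x c * (\<Prod>b\<in>set xs - {c}. gg (y c) (y b)))"
      unfolding pfR PPR by (simp only: mult_ac)
    also have "\<dots> = PP M xs * h c" unfolding m1sq h_def using 2(2) by simp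
    finally show ?thesis unfolding c_def R_def .
  qed
  have "pf M (x # xs) = PP M xs * (\<Sum>k<length xs. h (xs!k))"
    using tm by (simp add: sum_distrib_left)
  also have "(\<Sum>k<length xs. h (xs!k)) = (\<Sum>c\<in>set xs. h c)"
    by (rule sum.reindex_bij_betw[OF bij_betw_nth[OF dx(1) refl refl]])
  also have "\<dots> = (\<Prod>c\<in>set xs. ff (y x) (y c))"
  proof -
    have xv: "\<forall>c\<in>set xs. y x + y c \<noteq> 0" using 2(5) dx(2) by auto
    have "(\<Sum>c\<in>set xs. h c) = (\<Prod>c\<in>set xs. ff (y x) (y c)) - (if even (card (set xs)) then 1 else 0)"
      using schur_sum[OF finite_set condxs] xv unfolding h_def by blast
    moreover have "card (set xs) = length xs" using dx(1) by (simp add: distinct_card)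
    ultimately show ?thesis using ol by simp
  qed
  finally show ?case using 2(2) by (simp add: mult.commute)
qed

lemma Qpair_closed: "r + s \<noteq> 0 \<Longrightarrow> Qpair aq r s = aq r * aq s * ff (Yv r) (Yv s)"
proof (induction s arbitrary: r)
  case 0
  have a: "Qpair aq r 0 = aq r" by (simp add: Qpair_def Qone_aq aq0)
  have "ff (Yv r) (Yv 0) = 1" using Yv_ne0[of r] 0 by (simp add: Yv0 ff_def)
  then show ?case using a by (simp add: aq0)
next
  case (Suc s)
  have IH: "Qpair aq (Suc r) s = aq (Suc r) * aq s * ff (Yv (Suc r)) (Yv s)" by (rule Suc.IH) simp
  have rec: "Qpair aq r (Suc s) = aq r * aq (Suc s) - aq (Suc r) * aq s - Qpair aq (Suc r) s"
    using Qpair_rec[of aq r s] unfolding Qone_aq by (simp add: eq_diff_eq)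
  define X where "X = qv ^ r"
  define Z where "Z = qv ^ s"
  define H where "H t = (t + inverse t) / (qv * t - inverse (qv * t))" for t
  define cI where "cI = cst \<i>"
  have aS: "aq (Suc s) = aq s * (cI * H Z)" "aq (Suc r) = aq r * (cI * H X)"
    unfolding aq_Suc X_def Z_def H_def cI_def by simp_all
  have pS: "qv ^ Suc s = qv * Z" "qv ^ Suc r = qv * X" unfolding X_def Z_def by simp_all
  have ffA: "ff (Yv r) (Yv (Suc s)) = ((qv*Z)^2 - X^2)/(1 - X^2*(qv*Z)^2)"
    using ffY[of r "Suc s"] unfolding pS X_def by simp
  have ffB: "ff (Yv (Suc r)) (Yv s) = (Z^2 - (qv*X)^2)/(1 - (qv*X)^2*Z^2)"
    using ffY[of "Suc r" s] unfolding pS Z_def by simp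
  have c1: "1 - X^2*(qv*Z)^2 \<noteq> 0" using P3[of r "Suc s"] unfolding pS X_def by simp
  have c2: "(qv*Z)^2 \<noteq> 1" using P2[of "Suc s"] unfolding pS by simp
  have c3: "(qv*X)^2 \<noteq> 1" using P2[of "Suc r"] unfolding pS by simp
  have nz: "X \<noteq> 0" "Z \<noteq> 0" unfolding X_def Z_def using qv_ne0 by simp_all
  have K: "H Z * ff (Yv r) (Yv (Suc s)) + H X * ff (Yv (Suc r)) (Yv s) = H Z - H X"
    unfolding ffA ffB H_def by (rule KI[OF qv_ne0 nz c1 c2 c3])
  then have K2: "H Z * ff (Yv r) (Yv (Suc s)) = H Z - H X - H X * ff (Yv (Suc r)) (Yv s)"
    by (simp add: eq_diff_eq)
  have "aq r * aq (Suc s) * ff (Yv r) (Yv (Suc s)) = aq r * aq s * cI * (H Z * ff (Yv r) (Yv (Suc s)))"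
    unfolding aS by (simp only: mult_ac)
  also have "\<dots> = aq r * aq s * cI * (H Z - H X - H X * ff (Yv (Suc r)) (Yv s))" unfolding K2 ..
  also have "\<dots> = aq r * aq (Suc s) - aq (Suc r) * aq s - aq (Suc r) * aq s * ff (Yv (Suc r)) (Yv s)"
    unfolding aS by (simp add: algebra_simps)
  finally show ?case unfolding rec IH by simp
qed

lemma QR:
  fixes X Z D :: "'a::field"
  assumes "X \<noteq> 0" "Z \<noteq> 0" "D \<noteq> 0" "X^2*Z^2 \<noteq> 1"
  shows "((X/Z - inverse (X/Z))/D) / ((X*Z - inverse (X*Z))/D) = (Z^2 - X^2)/(1 - X^2*Z^2)"
proof -
  have a: "X/Z - inverse (X/Z) = (X^2 - Z^2)/(X*Z)" using assms by (simp add: field_simps power2_eq_square)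
  have b: "X*Z - inverse (X*Z) = (X^2*Z^2 - 1)/(X*Z)" using assms by (simp add: field_simps power2_eq_square)
  have c: "X^2*Z^2 - 1 \<noteq> 0" "1 - X^2*Z^2 \<noteq> 0" "X*Z \<noteq> 0" using assms by auto
  have "((X/Z - inverse (X/Z))/D) / ((X*Z - inverse (X*Z))/D) = (X^2 - Z^2)/(X^2*Z^2 - 1)"
    unfolding a b using c assms(3) by (simp add: divide_simps)
  also have "\<dots> = (Z^2 - X^2)/(1 - X^2*Z^2)"
    by (metis minus_diff_eq minus_divide_divide)
  finally show ?thesis .
qed

lemma qint_nat: "qint (int n) = (qv^n - inverse (qv^n)) / (qv - inverse qv)"
  unfolding qint_def by (simp add: power_int_minus)

lemma qint_ratio: "s < r \<Longrightarrow> qint (int r - int s) / qint (int r + int s) = ff (Yv r) (Yv s)"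
proof -
  assume sr: "s < r"
  have e: "int r - int s = int (r - s)" "int r + int s = int (r + s)" using sr by simp_all
  define X where "X = qv ^ r"
  define Z where "Z = qv ^ s"
  have p: "qv^(r-s) = X/Z" "qv^(r+s) = X*Z" unfolding X_def Z_def
    using sr qv_ne0 by (simp_all add: power_diff power_add)
  have nz: "X \<noteq> 0" "Z \<noteq> 0" unfolding X_def Z_def using qv_ne0 by simp_all
  have D: "qv - inverse qv \<noteq> 0"
  proof
    assume "qv - inverse qv = 0"
    then have "qv * qv = 1" using qv_ne0 by (simp add: field_simps)
    then show False using P2[of 1] by (simp add: power2_eq_square)
  qed
  have c: "X^2*Z^2 \<noteq> 1" using P3[of r s] sr unfolding X_def Z_def by simp
  show ?thesis unfolding e qint_nat p ffY[of r s, OF _] using sr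
    using QR[OF nz D c] unfolding X_def Z_def
    by (simp add: ffY)
qed

theorem theorem2p27:
  fixes lam :: "nat list"
  assumes "strict_partition lam"
  shows "schurQ aq lam =
    (\<Prod>j<length lam. aq (lam ! j)) *
    (\<Prod>i<length lam. \<Prod>j\<in>{i<..<length lam}.
        qint (int (lam ! i) - int (lam ! j)) / qint (int (lam ! i) + int (lam ! j)))"
proof -
  define mu where "mu = pad_even lam"
  define n where "n = length mu"
  define m where "m = length lam"
  have sl: "sorted_wrt (>) lam" "\<forall>x\<in>set lam. x > 0" using assms unfolding strict_partition_def by auto
  have smu: "sorted_wrt (>) mu"
    unfolding mu_def pad_even_def using sl by (auto simp: sorted_wrt_append)
  have evn: "even n" unfolding n_def mu_def pad_even_def by simp
  have gt: "mu!j < mu!i" if "i < j" "j < n" for i j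
    using sorted_wrt_nth_less[OF smu that[unfolded n_def]] by simp
  have ne: "mu!i \<noteq> mu!j" if "i \<noteq> j" "i < n" "j < n" for i j
    using gt that by (metis less_irrefl_nat linorder_neqE_nat)
  define c where "c i = aq (mu!i)" for i
  define y where "y i = Yv (mu!i)" for i
  have s1: "schurQ aq lam = pf (\<lambda>i j. Qpair aq (mu!i) (mu!j)) [0..<n]"
    by (simp add: schurQ_def mu_def n_def Let_def)
  have s2: "pf (\<lambda>i j. Qpair aq (mu!i) (mu!j)) [0..<n] = pf (\<lambda>i j. c i * c j * ff (y i) (y j)) [0..<n]"
  proof (rule pf_cong)
    show "sorted_wrt (<) [0..<n]" by simp
    show "\<forall>i\<in>set [0..<n]. \<forall>j\<in>set [0..<n]. i < j \<longrightarrow> Qpair aq (mu!i) (mu!j) = c i * c j * ff (y i) (y j)"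
    proof (intro ballI impI)
      fix i j assume "i \<in> set [0..<n]" "j \<in> set [0..<n]" "i < j"
      then have "mu!j < mu!i" using gt by simp
      then have "mu!i + mu!j \<noteq> 0" by simp
      then show "Qpair aq (mu!i) (mu!j) = c i * c j * ff (y i) (y j)"
        unfolding c_def y_def by (rule Qpair_closed)
    qed
  qed
  have s3: "pf (\<lambda>i j. c i * c j * ff (y i) (y j)) [0..<n] = (\<Prod>i\<in>set [0..<n]. c i) * pf (\<lambda>i j. ff (y i) (y j)) [0..<n]"
    by (rule pf_scale) simp
  have s4: "pf (\<lambda>i j. ff (y i) (y j)) [0..<n] = PP (\<lambda>i j. ff (y i) (y j)) [0..<n]"
  proof (rule schur_pf[OF refl])
    show "distinct [0..<n]" by simp
    show "even (length [0..<n])" using evn by simp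
    show "\<forall>i\<in>set [0..<n]. \<forall>j\<in>set [0..<n]. i \<noteq> j \<longrightarrow> y i \<noteq> y j \<and> y i + y j \<noteq> 0"
    proof (intro ballI impI)
      fix i j assume "i \<in> set [0..<n]" "j \<in> set [0..<n]" "i \<noteq> j"
      then have "mu!i \<noteq> mu!j" using ne by simp
      then show "y i \<noteq> y j \<and> y i + y j \<noteq> 0" unfolding y_def using Yv_inj Yv_sum by blast
    qed
  qed
  have LHS: "schurQ aq lam = (\<Prod>i<n. c i) * (\<Prod>i<n. \<Prod>j\<in>{i<..<n}. ff (y i) (y j))"
    unfolding s1 s2 s3 s4 PP_upt by (simp add: atLeast0LessThan)
  have qr: "qint (int (lam ! i) - int (lam ! j)) / qint (int (lam ! i) + int (lam ! j)) = ff (Yv (lam!i)) (Yv (lam!j))"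
    if "i < j" "j < m" for i j
  proof -
    have "lam!j < lam!i" using sorted_wrt_nth_less[OF sl(1) that[unfolded m_def]] by simp
    then show ?thesis by (rule qint_ratio)
  qed
  have RHS: "(\<Prod>i<length lam. \<Prod>j\<in>{i<..<length lam}.
        qint (int (lam ! i) - int (lam ! j)) / qint (int (lam ! i) + int (lam ! j)))
      = (\<Prod>i<m. \<Prod>j\<in>{i<..<m}. ff (Yv (lam!i)) (Yv (lam!j)))"
    unfolding m_def[symmetric] by (intro prod.cong refl) (auto simp: qr)
  show ?thesis
  proof (cases "even m")
    case True
    then have "mu = lam" unfolding mu_def pad_even_def m_def by simp
    then have "n = m" "c = (\<lambda>i. aq (lam!i))" "y = (\<lambda>i. Yv (lam!i))"
      unfolding n_def m_def c_def y_def by auto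
    then show ?thesis unfolding LHS RHS m_def by simp
  next
    case False
    then have mu: "mu = lam @ [0]" unfolding mu_def pad_even_def m_def by simp
    have nm: "n = Suc m" unfolding n_def mu m_def by simp
    have mui: "mu!i = lam!i" if "i < m" for i using that unfolding mu m_def by (simp add: nth_append)
    have mum: "mu!m = 0" unfolding mu m_def by simp
    have C: "(\<Prod>i<n. c i) = (\<Prod>i<m. aq (lam!i))"
      unfolding nm by (simp add: c_def mui mum aq0)
    have inner: "(\<Prod>j\<in>{i<..<Suc m}. ff (y i) (y j)) = (\<Prod>j\<in>{i<..<m}. ff (Yv (lam!i)) (Yv (lam!j)))"
      if i: "i < m" for i
    proof -
      have "{i<..<Suc m} = insert m {i<..<m}" using i by auto
      then have "(\<Prod>j\<in>{i<..<Suc m}. ff (y i) (y j)) = ff (y i) (y m) * (\<Prod>j\<in>{i<..<m}. ff (y i) (y j))"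
        by simp
      moreover have "ff (y i) (y m) = 1"
      proof -
        have "lam!i \<in> set lam" using i m_def by simp
        then have "lam!i > 0" using sl(2) by simp
        then have "Yv (lam!i) \<noteq> 0" using Yv_ne0 by simp
        then show ?thesis unfolding y_def mum mui[OF i] Yv0 ff_def by simp
      qed
      moreover have "(\<Prod>j\<in>{i<..<m}. ff (y i) (y j)) = (\<Prod>j\<in>{i<..<m}. ff (Yv (lam!i)) (Yv (lam!j)))"
        unfolding y_def using i by (intro prod.cong refl) (simp add: mui)
      ultimately show ?thesis by simp
    qed
    have P: "(\<Prod>i<n. \<Prod>j\<in>{i<..<n}. ff (y i) (y j)) = (\<Prod>i<m. \<Prod>j\<in>{i<..<m}. ff (Yv (lam!i)) (Yv (lam!j)))"
    proof -
      have "(\<Prod>i<n. \<Prod>j\<in>{i<..<n}. ff (y i) (y j)) = (\<Prod>i<m. \<Prod>j\<in>{i<..<Suc m}. ff (y i) (y j)) * (\<Prod>j\<in>{m<..<Suc m}. ff (y m) (y j))"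
        unfolding nm by simp
      also have "{m<..<Suc m} = ({}::nat set)" by auto
      then have "(\<Prod>j\<in>{m<..<Suc m}. ff (y m) (y j)) = 1" by simp
      also have "(\<Prod>i<m. \<Prod>j\<in>{i<..<Suc m}. ff (y i) (y j)) = (\<Prod>i<m. \<Prod>j\<in>{i<..<m}. ff (Yv (lam!i)) (Yv (lam!j)))"
        by (rule prod.cong[OF refl]) (simp add: inner)
      finally show ?thesis by simp
    qed
    show ?thesis unfolding LHS RHS C P m_def ..
  qed
qed

end
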